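(* Let $(X,d)$ be a complete metric space and let $T:X\to X$ satisfy, for all $x,y\in X$ with $Tx\neq Ty$, $F(d(Tx,Ty))\le E(d(x,y))$, where $F,E:(0,\infty)\to\mathbb{R}$ satisfy: $(p_1)$ $F$ is nondecreasing; $(p_2)$ $E(t)<F(t)$ for every $t>0$; $(p_3)$ for every $\varepsilon>0$ and every sequence $(t_n)\subset(\varepsilon,\infty)$ with $t_n\to\varepsilon$, $\liminf_{n\to\infty}E(t_n)<F(\varepsilon^+)$, where $F(\varepsilon^+)=\lim_{s\to\varepsilon^+}F(s)$. Then $T$ is a CJMP-contraction, and hence a Picard operator.
   Context: $T$ is contractive if $d(Tx,Ty)<d(x,y)$ for all $x\neq y$. $T$ is a CJMP-contraction if it is contractive and for every $\varepsilon>0$ there exists $\delta>0$ such that for all $x,y\in X$, $\varepsilon<d(x,y)<\varepsilon+\delta$ implies $d(Tx,Ty)\le\varepsilon$. $T$ is a Picard operator if $T$ has a unique fixed point $u\in X$ and for every $x\in X$ the sequence $(T^nx)_{n\in\mathbb{N}}$ converges to $u$. *)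

theory Defs
  imports "HOL-Analysis.Analysis"
begin

definition contractive :: "('a::metric_space \<Rightarrow> 'a) \<Rightarrow> bool" where
  "contractive T \<longleftrightarrow> (\<forall>x y. x \<noteq> y \<longrightarrow> dist (T x) (T y) < dist x y)"

definition CJMP_contraction :: "('a::metric_space \<Rightarrow> 'a) \<Rightarrow> bool" where
  "CJMP_contraction T \<longleftrightarrow> contractive T \<and>
     (\<forall>\<epsilon>>0. \<exists>\<delta>>0. \<forall>x y. \<epsilon> < dist x y \<and> dist x y < \<epsilon> + \<delta> \<longrightarrow> dist (T x) (T y) \<le> \<epsilon>)"

definition picard_operator :: "('a::metric_space \<Rightarrow> 'a) \<Rightarrow> bool" where
  "picard_operator T \<longleftrightarrow> (\<exists>u. T u = u \<and> (\<forall>v. T v = v \<longrightarrow> v = u) \<and>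
     (\<forall>x. (\<lambda>n. (T ^^ n) x) \<longlonglongrightarrow> u))"

end

theory Submission
  imports Defs
begin

lemma mono_right_lim:
  fixes F :: "real \<Rightarrow> real"
  assumes p1: "\<forall>s t. 0 < s \<and> s \<le> t \<longrightarrow> F s \<le> F t" and e: "0 < e" and s: "e < s"
  shows "Lim (at_right e) F \<le> F s"
proof -
  define L where "L = Inf (F ` {e<..<e+1})"
  have bdd: "bdd_below (F ` {e<..<e+1})"
    unfolding bdd_below_def using p1 e by (intro exI[of _ "F e"]) auto
  have ne: "{e<..<e+1} \<noteq> {}" by auto
  have lb: "L \<le> F x" if "x \<in> {e<..<e+1}" for x
    unfolding L_def using bdd that by (intro cInf_lower) auto
  have lim: "(F \<longlongrightarrow> L) (at_right e)"
  proof (rule order_tendstoI)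
    fix a assume "a < L"
    have ev: "eventually (\<lambda>x. x \<in> {e<..<e+1}) (at_right e)"
      by (rule eventually_at_right_real) simp
    show "eventually (\<lambda>x. a < F x) (at_right e)"
      using ev
    proof (rule eventually_mono)
      fix x assume "x \<in> {e<..<e+1}"
      then have "L \<le> F x" by (rule lb)
      then show "a < F x" using \<open>a < L\<close> by simp
    qed
  next
    fix a assume "L < a"
    have "\<exists>v\<in>F ` {e<..<e+1}. v < a"
      by (rule cInf_lessD) (use ne \<open>L < a\<close> L_def in auto)
    then obtain y where y: "y \<in> {e<..<e+1}" "F y < a" by blast
    have ev: "eventually (\<lambda>x. x \<in> {e<..<y}) (at_right e)"
      using eventually_at_right_real[of e y] y(1) by simp
    show "eventually (\<lambda>x. F x < a) (at_right e)"
      using ev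
    proof (rule eventually_mono)
      fix x assume "x \<in> {e<..<y}"
      then have "F x \<le> F y" using p1 e by auto
      then show "F x < a" using y(2) by simp
    qed
  qed
  have "Lim (at_right e) F = L"
    by (rule tendsto_Lim[OF _ lim]) simp
  moreover have "L \<le> F s"
  proof (cases "s < e + 1")
    case True then show ?thesis using lb s by auto
  next
    case False
    then have "L \<le> F (e + 1/2)" using lb by auto
    also have "\<dots> \<le> F s" using p1 e False by auto
    finally show ?thesis .
  qed
  ultimately show ?thesis by simp
qed

lemma CJMP_picard:
  fixes T :: "'a::complete_space \<Rightarrow> 'a"
  assumes CJ: "CJMP_contraction T"
  shows "picard_operator T"
proof -
  have ctr: "\<And>x y. x \<noteq> y \<Longrightarrow> dist (T x) (T y) < dist x y"
    using CJ unfolding CJMP_contraction_def contractive_def by blast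
  have le: "\<And>x y. dist (T x) (T y) \<le> dist x y"
    by (metis ctr dist_self less_imp_le order_refl)
  have cj: "\<And>e. e > 0 \<Longrightarrow> \<exists>\<delta>>0. \<forall>x y. e < dist x y \<and> dist x y < e + \<delta> \<longrightarrow> dist (T x) (T y) \<le> e"
    using CJ unfolding CJMP_contraction_def by blast
  have cj2: "\<exists>\<delta>>0. \<delta> \<le> e \<and> (\<forall>x y. dist x y < e + \<delta> \<longrightarrow> dist (T x) (T y) \<le> e)" if e: "e > 0" for e
  proof -
    obtain \<delta> where d: "\<delta> > 0" "\<forall>x y. e < dist x y \<and> dist x y < e + \<delta> \<longrightarrow> dist (T x) (T y) \<le> e"
      using cj[OF e] by blast
    show ?thesis
    proof (intro exI[of _ "min \<delta> e"] conjI allI impI)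
      fix x y :: 'a assume h: "dist x y < e + min \<delta> e"
      show "dist (T x) (T y) \<le> e"
      proof (cases "e < dist x y")
        case True then show ?thesis using d h by auto
      next
        case False then show ?thesis using le[of x y] by linarith
      qed
    qed (use e d in auto)
  qed
  have conv: "\<exists>u. (\<lambda>n. (T ^^ n) x0) \<longlonglongrightarrow> u \<and> T u = u" for x0
  proof -
    define x where "x n = (T ^^ n) x0" for n
    have xs: "\<And>n. x (Suc n) = T (x n)" by (simp add: x_def)
    define d where "d n = dist (x n) (x (Suc n))" for n
    have dec: "\<And>n. d (Suc n) \<le> d n" unfolding d_def using le xs by metis
    have "decseq d" by (simp add: decseq_SucI dec)
    then obtain r where r: "d \<longlonglongrightarrow> r" "\<forall>i. r \<le> d i"
      using decseq_convergent[of d 0] unfolding d_def by auto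
    have r0: "r = 0"
    proof (rule ccontr)
      assume "r \<noteq> 0"
      have "r \<ge> 0" using r(1) by (rule LIMSEQ_le_const) (simp add: d_def)
      then have rp: "r > 0" using \<open>r \<noteq> 0\<close> by simp
      have gt: "d n > r" for n
      proof -
        have "d (Suc n) > 0" using r(2) rp by (metis less_le_trans)
        then have "x (Suc n) \<noteq> x (Suc (Suc n))" unfolding d_def by auto
        then have "x n \<noteq> x (Suc n)" using xs by metis
        then have "d (Suc n) < d n" unfolding d_def using ctr xs by metis
        then show ?thesis using r(2) by (metis le_less_trans)
      qed
      obtain \<delta> where dl: "\<delta> > 0" "\<forall>x y. r < dist x y \<and> dist x y < r + \<delta> \<longrightarrow> dist (T x) (T y) \<le> r"
        using cj[OF rp] by blast
      have "eventually (\<lambda>n. d n < r + \<delta>) sequentially"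
        using r(1) dl(1) by (intro order_tendstoD) auto
      then obtain n where "d n < r + \<delta>" by (meson eventually_sequentially order_refl)
      then have "d (Suc n) \<le> r" using dl(2) gt[of n] xs unfolding d_def by metis
      then show False using gt[of "Suc n"] by simp
    qed
    have cau: "Cauchy x"
    proof (rule metric_CauchyI)
      fix e :: real assume e: "e > 0"
      define \<epsilon> where "\<epsilon> = e / 4"
      have ep: "\<epsilon> > 0" using e \<epsilon>_def by simp
      have e4: "4 * \<epsilon> = e" using \<epsilon>_def by simp
      obtain \<delta> where dl: "\<delta> > 0" "\<delta> \<le> \<epsilon>" "\<forall>x y. dist x y < \<epsilon> + \<delta> \<longrightarrow> dist (T x) (T y) \<le> \<epsilon>"
        using cj2[OF ep] by blast
      have "eventually (\<lambda>n. d n < \<delta>) sequentially"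
        using r(1) r0 dl(1) by (intro order_tendstoD) auto
      then obtain M where M: "d M < \<delta>" by (meson eventually_sequentially order_refl)
      have k: "dist (x M) (x (M + k)) < \<epsilon> + \<delta>" for k
      proof (induction k)
        case 0 then show ?case using ep dl by simp
      next
        case (Suc k)
        have "dist (x (Suc M)) (x (Suc (M + k))) \<le> \<epsilon>" using dl(3) Suc xs by metis
        moreover have "dist (x M) (x (M + Suc k)) \<le> d M + dist (x (Suc M)) (x (Suc (M + k)))"
          unfolding d_def by (simp add: dist_triangle)
        ultimately show ?case using M by simp
      qed
      have "\<forall>m\<ge>M. \<forall>n\<ge>M. dist (x m) (x n) < e"
      proof (intro allI impI)
        fix m n assume "m \<ge> M" "n \<ge> M"
        then have "dist (x M) (x m) < \<epsilon> + \<delta>" "dist (x M) (x n) < \<epsilon> + \<delta>"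
          using k by (metis le_add_diff_inverse)+
        then have "dist (x m) (x n) < 2 * (\<epsilon> + \<delta>)"
          using dist_triangle3[of "x m" "x n" "x M"] by (smt (verit))
        then show "dist (x m) (x n) < e" using dl(2) e4 by (smt (verit))
      qed
      then show "\<exists>M. \<forall>m\<ge>M. \<forall>n\<ge>M. dist (x m) (x n) < e" by blast
    qed
    then obtain u where u: "x \<longlonglongrightarrow> u" using Cauchy_convergent convergent_def by blast
    have "(\<lambda>n. T (x n)) \<longlonglongrightarrow> T u"
    proof -
      have "(\<lambda>n. dist (x n) u) \<longlonglongrightarrow> 0" using u tendsto_dist_iff by blast
      then have "(\<lambda>n. dist (T (x n)) (T u)) \<longlonglongrightarrow> 0"
        using tendsto_sandwich[of "\<lambda>n. 0" "\<lambda>n. dist (T (x n)) (T u)" sequentially "\<lambda>n. dist (x n) u" 0] le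
        by auto
      then show ?thesis using tendsto_dist_iff by blast
    qed
    moreover have "(\<lambda>n. T (x n)) \<longlonglongrightarrow> u"
      using LIMSEQ_Suc[OF u] xs by simp
    ultimately have "T u = u" using LIMSEQ_unique by blast
    moreover have "x = (\<lambda>n. (T ^^ n) x0)" using x_def by (simp add: fun_eq_iff)
    ultimately show ?thesis using u by auto
  qed
  obtain u where u: "T u = u" using conv by blast
  have uniq: "v = u" if v: "T v = v" for v
  proof (rule ccontr)
    assume "v \<noteq> u"
    then have "dist (T v) (T u) < dist v u" by (rule ctr)
    then show False using v u by simp
  qed
  have all: "\<forall>x0. (\<lambda>n. (T ^^ n) x0) \<longlonglongrightarrow> u"
  proof
    fix x0
    obtain w where w: "(\<lambda>n. (T ^^ n) x0) \<longlonglongrightarrow> w" "T w = w" using conv[of x0] by blast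
    then show "(\<lambda>n. (T ^^ n) x0) \<longlonglongrightarrow> u" using uniq[OF w(2)] by simp
  qed
  show ?thesis unfolding picard_operator_def
    using u all uniq by blast
qed

theorem mainTheorem11:
  fixes T :: "'a::complete_space \<Rightarrow> 'a" and F E :: "real \<Rightarrow> real"
  assumes contr: "\<forall>x y. T x \<noteq> T y \<longrightarrow> F (dist (T x) (T y)) \<le> E (dist x y)"
    and p1: "\<forall>s t. 0 < s \<and> s \<le> t \<longrightarrow> F s \<le> F t"
    and p2: "\<forall>t>0. E t < F t"
    and p3: "\<forall>\<epsilon>>0. \<forall>t :: nat \<Rightarrow> real. (\<forall>n. \<epsilon> < t n) \<and> t \<longlonglongrightarrow> \<epsilon> \<longrightarrow>
               liminf (\<lambda>n. ereal (E (t n))) < ereal (Lim (at_right \<epsilon>) F)"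
  shows "CJMP_contraction T \<and> picard_operator T"
proof -
  have ctr: "contractive T"
    unfolding contractive_def
  proof (intro allI impI)
    fix x y :: 'a assume "x \<noteq> y"
    show "dist (T x) (T y) < dist x y"
    proof (cases "T x = T y")
      case True then show ?thesis using \<open>x \<noteq> y\<close> by simp
    next
      case False
      have h: "F (dist (T x) (T y)) \<le> E (dist x y)" using contr False by blast
      have "E (dist x y) < F (dist x y)" using p2 \<open>x \<noteq> y\<close> by simp
      then show ?thesis using h p1 False
        by (smt (verit, best) zero_less_dist_iff)
    qed
  qed
  have cj: "\<exists>\<delta>>0. \<forall>x y. e < dist x y \<and> dist x y < e + \<delta> \<longrightarrow> dist (T x) (T y) \<le> e"
    if e: "e > 0" for e
  proof (rule ccontr)
    assume neg: "\<not> ?thesis"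
    have A: "\<forall>\<delta>>0. \<exists>x y. e < dist x y \<and> dist x y < e + \<delta> \<and> e < dist (T x) (T y)"
    proof (intro allI impI)
      fix \<delta> :: real assume "\<delta> > 0"
      then have "\<not> (\<forall>x y. e < dist x y \<and> dist x y < e + \<delta> \<longrightarrow> dist (T x) (T y) \<le> e)"
        using neg by blast
      then obtain x y where "\<not> (e < dist x y \<and> dist x y < e + \<delta> \<longrightarrow> dist (T x) (T y) \<le> e)"
        by blast
      then show "\<exists>x y. e < dist x y \<and> dist x y < e + \<delta> \<and> e < dist (T x) (T y)"
        by (intro exI[of _ x] exI[of _ y]) auto
    qed
    have "\<forall>n::nat. \<exists>x y. e < dist x y \<and> dist x y < e + 1/(Suc n) \<and> e < dist (T x) (T y)"
    proof
      fix n :: nat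
      have "(0::real) < 1/(Suc n)" by simp
      then show "\<exists>x y. e < dist x y \<and> dist x y < e + 1/(Suc n) \<and> e < dist (T x) (T y)"
        using A by blast
    qed
    then obtain X Y where XY: "\<And>n. e < dist (X n) (Y n) \<and> dist (X n) (Y n) < e + 1/(Suc n) \<and> e < dist (T (X n)) (T (Y n))"
      by metis
    define p where "p n = (X n, Y n)" for n
    have p: "\<And>n. e < dist (fst (p n)) (snd (p n)) \<and> dist (fst (p n)) (snd (p n)) < e + 1/(Suc n)
        \<and> dist (T (fst (p n))) (T (snd (p n))) > e"
      using XY p_def by simp
    define t where "t n = dist (fst (p n)) (snd (p n))" for n
    have tgt: "\<forall>n. e < t n" using p t_def by auto
    have tlim: "t \<longlonglongrightarrow> e"
    proof (rule tendsto_sandwich[of "\<lambda>n. e" _ _ "\<lambda>n. e + 1/Suc n"])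
      show "\<forall>\<^sub>F n in sequentially. e \<le> t n" using tgt by (simp add: less_imp_le)
      show "\<forall>\<^sub>F n in sequentially. t n \<le> e + 1/Suc n" using p t_def by (simp add: less_imp_le)
      show "(\<lambda>n. e) \<longlonglongrightarrow> e" by simp
      have "(\<lambda>n. 1 / real (Suc n)) \<longlonglongrightarrow> 0" using LIMSEQ_inverse_real_of_nat
        by (simp add: inverse_eq_divide)
      then show "(\<lambda>n. e + 1 / real (Suc n)) \<longlonglongrightarrow> e"
        using tendsto_add[of "\<lambda>n. e" e sequentially "\<lambda>n. 1 / real (Suc n)" 0] by simp
    qed
    have "ereal (Lim (at_right e) F) \<le> ereal (E (t n))" for n
    proof -
      have ne: "T (fst (p n)) \<noteq> T (snd (p n))" using p[of n] e by auto
      have "Lim (at_right e) F \<le> F (dist (T (fst (p n))) (T (snd (p n))))"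
        using mono_right_lim[OF p1 e] p[of n] by blast
      also have "\<dots> \<le> E (t n)" using contr ne unfolding t_def by blast
      finally show ?thesis by simp
    qed
    then have a1: "ereal (Lim (at_right e) F) \<le> liminf (\<lambda>n. ereal (E (t n)))"
      by (intro Liminf_bounded always_eventually) blast
    have a2: "liminf (\<lambda>n. ereal (E (t n))) < ereal (Lim (at_right e) F)"
      using p3 e tgt tlim by blast
    show False using a1 a2 by simp
  qed
  have "CJMP_contraction T" unfolding CJMP_contraction_def using ctr cj by blast
  then show ?thesis using CJMP_picard by blast
qed

end
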